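(* Let $m$ be a positive integer, $T=\{1,2\}^m$, and $d$ an integer with $4\le d\le m/2$. Then for every $r\in T$, the number of vectors $s\in T\setminus\{r\}$ with $d_{\mathrm{ERP}}(r,s)\le d$ is less than $\big(\frac{3em}{d}\big)^{2d}$.
   Context: Edit Distance with Real Penalty (ERP): for finite real sequences $r,s$ (possibly of different lengths), let $m'$ be the length of the longer one. A gap insertion inserts a zero-valued coordinate at any position. For $p\ge m'$ let $R_p$ (resp. $S_p$) be the set of length-$p$ sequences obtainable from $r$ (resp. $s$) by gap insertions. Then $d_{\mathrm{ERP}}(r,s)=\min_{p\ge m',\ \tilde r\in R_p,\ \tilde s\in S_p}\|\tilde r-\tilde s\|_1$. *)

theory Defs
  imports Complex_Main
begin

inductive gap_ins :: "real list \<Rightarrow> real list \<Rightarrow> bool" where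
  refl: "gap_ins r r"
| insert: "gap_ins r x \<Longrightarrow> i \<le> length x \<Longrightarrow> gap_ins r (take i x @ 0 # drop i x)"

definition l1_dist :: "real list \<Rightarrow> real list \<Rightarrow> real" where
  "l1_dist x y = (\<Sum>(a, b) \<leftarrow> zip x y. \<bar>a - b\<bar>)"

text \<open>Edit Distance with Real Penalty (the minimum is attained, so Inf = min).\<close>
definition d_erp :: "real list \<Rightarrow> real list \<Rightarrow> real" where
  "d_erp r s = Inf {l1_dist x y | p x y.
      p \<ge> max (length r) (length s) \<and> length x = p \<and> length y = p
      \<and> gap_ins r x \<and> gap_ins s y}"

definition T_set :: "nat \<Rightarrow> real list set" where
  "T_set m = {s. length s = m \<and> set s \<subseteq> {1, 2}}"

end

theory Submission
  imports Defs
begin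

datatype stp = Keep | Del | Mis | Ins1 | Ins2

lemma stp_UNIV: "(UNIV::stp set) = {Keep, Del, Mis, Ins1, Ins2}"
  by (auto intro: stp.exhaust)

definition W :: "nat \<Rightarrow> nat \<Rightarrow> stp list set" where
  "W N d = {w. length w = N \<and> length (filter (\<lambda>t. t \<noteq> Keep) w) \<le> d}"

lemma finite_W: "finite (W N d)"
proof -
  have "W N d \<subseteq> {w. set w \<subseteq> UNIV \<and> length w = N}" unfolding W_def by auto
  moreover have "finite {w. set w \<subseteq> (UNIV::stp set) \<and> length w = N}"
    by (rule finite_lists_length_eq) (simp add: stp_UNIV)
  ultimately show ?thesis by (rule finite_subset)
qed

lemma card_W:
  fixes y :: real
  assumes y: "0 < y" "y \<le> 1"
  shows "real (card (W N d)) \<le> (1/y)^d * (1 + 4*y)^N"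
proof (induction N arbitrary: d)
  case 0
  have "W 0 d = {[]}" unfolding W_def by auto
  moreover have "1 \<le> (1/y)^d" using y by (intro one_le_power) simp
  ultimately show ?case by simp
next
  case (Suc N)
  show ?case
  proof (cases d)
    case 0
    have "W (Suc N) d \<subseteq> Cons Keep ` W N d"
    proof
      fix w assume "w \<in> W (Suc N) d"
      then obtain t w' where w: "w = t # w'" "length w' = N"
        "length (filter (\<lambda>t. t \<noteq> Keep) (t # w')) \<le> d"
        unfolding W_def by (cases w) auto
      then show "w \<in> Cons Keep ` W N d" using 0 unfolding W_def
        by (cases "t = Keep") auto
    qed
    then have "card (W (Suc N) d) \<le> card (Cons Keep ` W N d)"
      by (intro card_mono finite_imageI finite_W)
    also have "\<dots> = card (W N d)" by (simp add: card_image)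
    finally have "real (card (W (Suc N) d)) \<le> (1/y)^d * (1 + 4*y)^N"
      using Suc.IH[of d] by linarith
    also have "\<dots> \<le> (1/y)^d * (1 + 4*y)^Suc N"
      using y by (intro mult_left_mono) (auto intro!: power_increasing)
    finally show ?thesis .
  next
    case (Suc e)
    let ?A = "Cons Keep ` W N d"
    let ?B = "Cons Del ` W N e \<union> Cons Mis ` W N e \<union> Cons Ins1 ` W N e \<union> Cons Ins2 ` W N e"
    have sub: "W (Suc N) d \<subseteq> ?A \<union> ?B"
    proof
      fix w assume "w \<in> W (Suc N) d"
      then obtain t w' where w: "w = t # w'" "length w' = N"
        "length (filter (\<lambda>t. t \<noteq> Keep) (t # w')) \<le> d"
        unfolding W_def by (cases w) auto
      then show "w \<in> ?A \<union> ?B" using Suc unfolding W_def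
        by (cases t) auto
    qed
    have fin: "finite (?A \<union> ?B)" by (simp add: finite_W)
    have "card (W (Suc N) d) \<le> card (?A \<union> ?B)" by (rule card_mono[OF fin sub])
    also have "\<dots> \<le> card ?A + card ?B" by (rule card_Un_le)
    also have "card ?B \<le> 4 * card (W N e)"
    proof -
      have "card ?B \<le> card (Cons Del ` W N e) + card (Cons Mis ` W N e)
          + card (Cons Ins1 ` W N e) + card (Cons Ins2 ` W N e)"
        using card_Un_le[of "Cons Del ` W N e \<union> Cons Mis ` W N e \<union> Cons Ins1 ` W N e" "Cons Ins2 ` W N e"]
          card_Un_le[of "Cons Del ` W N e \<union> Cons Mis ` W N e" "Cons Ins1 ` W N e"]
          card_Un_le[of "Cons Del ` W N e" "Cons Mis ` W N e"] by linarith
      then show ?thesis by (simp add: card_image)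
    qed
    finally have c: "card (W (Suc N) d) \<le> card (W N d) + 4 * card (W N e)"
      by (simp add: card_image)
    have "real (card (W (Suc N) d)) \<le> real (card (W N d)) + 4 * real (card (W N e))"
      using c by (metis of_nat_add of_nat_le_iff of_nat_mult of_nat_numeral)
    also have "\<dots> \<le> (1/y)^d * (1 + 4*y)^N + 4 * ((1/y)^e * (1 + 4*y)^N)"
      using Suc.IH[of d] Suc.IH[of e] by linarith
    also have "\<dots> = (1/y)^d * (1 + 4*y)^Suc N"
      using y Suc by (simp add: field_simps)
    finally show ?thesis .
  qed
qed

fun dec :: "real list \<Rightarrow> stp list \<Rightarrow> real list" where
  "dec r [] = []"
| "dec r (Ins1 # w) = 1 # dec r w"
| "dec r (Ins2 # w) = 2 # dec r w"
| "dec [] (t # w) = dec [] w"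
| "dec (a # r) (Keep # w) = a # dec r w"
| "dec (a # r) (Del # w) = dec r w"
| "dec (a # r) (Mis # w) = (3 - a) # dec r w"

definition tau :: "real \<times> real \<Rightarrow> stp" where
  "tau z = (case z of (a, b) \<Rightarrow> if a = b then Keep else if a = 0 then (if b = 1 then Ins1 else Ins2)
     else if b = 0 then Del else Mis)"

lemma dec_replicate: "dec [] (replicate n Keep) = []"
  by (induction n) auto

lemma dec_append:
  assumes "\<forall>(a, b)\<in>set zs. a \<in> {0,1,2} \<and> b \<in> {0,1,2} \<and> \<not> (a = 0 \<and> b = 0)"
  shows "dec (filter (\<lambda>a. a \<noteq> 0) (map fst zs)) (map tau zs @ ws)
    = filter (\<lambda>a. a \<noteq> 0) (map snd zs) @ dec [] ws"
  using assms
proof (induction zs)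
  case Nil then show ?case by simp
next
  case (Cons z zs)
  obtain a b where z: "z = (a, b)" by fastforce
  have ab: "a \<in> {0,1,2}" "b \<in> {0,1,2}" "\<not> (a = 0 \<and> b = 0)" using Cons.prems z by auto
  have IH: "dec (filter (\<lambda>a. a \<noteq> 0) (map fst zs)) (map tau zs @ ws)
    = filter (\<lambda>a. a \<noteq> 0) (map snd zs) @ dec [] ws" using Cons by auto
  have t: "tau (a, b) = (if a = b then Keep else if a = 0 then (if b = 1 then Ins1 else Ins2)
     else if b = 0 then Del else Mis)" by (simp add: tau_def)
  from ab consider "a = b" "a \<noteq> 0" | "a = 0" "b = 1" | "a = 0" "b = 2" | "a \<noteq> 0" "b = 0"
    | "a = 1" "b = 2" | "a = 2" "b = 1" by auto
  then show ?case using IH z t by cases simp_all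
qed

lemma gap_props: "gap_ins r x \<Longrightarrow> filter (\<lambda>a. a \<noteq> 0) x = filter (\<lambda>a. a \<noteq> 0) r \<and> set x \<subseteq> set r \<union> {0}"
proof (induction rule: gap_ins.induct)
  case refl then show ?case by auto
next
  case (insert r x i)
  have "filter (\<lambda>a. a \<noteq> 0) (take i x @ 0 # drop i x) = filter (\<lambda>a. a \<noteq> 0) (take i x) @ filter (\<lambda>a. a \<noteq> 0) (drop i x)"
    by simp
  also have "\<dots> = filter (\<lambda>a. a \<noteq> 0) (take i x @ drop i x)" by (simp only: filter_append)
  also have "\<dots> = filter (\<lambda>a. a \<noteq> 0) x" by simp
  finally have 1: "filter (\<lambda>a. a \<noteq> 0) (take i x @ 0 # drop i x) = filter (\<lambda>a. a \<noteq> 0) r"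
    using insert by simp
  have "set (take i x @ 0 # drop i x) \<subseteq> set x \<union> {0}"
    using set_take_subset[of i x] set_drop_subset[of i x] by auto
  then show ?case using 1 insert by auto
qed

lemma filter_fst: "filter (\<lambda>a. a \<noteq> 0) (map fst (filter (\<lambda>(a, b). \<not> (a = 0 \<and> b = 0)) l))
   = filter (\<lambda>a. a \<noteq> (0::real)) (map fst l)"
  by (induction l) auto

lemma filter_snd: "filter (\<lambda>a. a \<noteq> 0) (map snd (filter (\<lambda>(a, b). \<not> (a = 0 \<and> b = 0)) l))
   = filter (\<lambda>a. a \<noteq> (0::real)) (map snd l)"
  by (induction l) auto

lemma filter_nd: "length (filter (\<lambda>(a, b). a \<noteq> b) (filter (\<lambda>(a, b). \<not> (a = 0 \<and> b = 0)) l))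
   = length (filter (\<lambda>(a, b). a \<noteq> (b::real)) l)"
  by (induction l) auto

lemma len_bound: "\<forall>(a, b)\<in>set l. \<not> (a = 0 \<and> b = 0) \<Longrightarrow>
   length l \<le> length (filter (\<lambda>a. a \<noteq> 0) (map fst l)) + length (filter (\<lambda>(a, b). a \<noteq> (b::real)) l)"
  by (induction l) auto

lemma tau_keep: "tau z = Keep \<longleftrightarrow> fst z = snd z"
  by (cases z) (simp add: tau_def)

lemma keep_count: "length (filter (\<lambda>t. t \<noteq> Keep) (map tau l)) = length (filter (\<lambda>(a, b). a \<noteq> b) l)"
  by (induction l) (auto simp: tau_keep split: prod.splits)

lemma nd_le_sum:
  assumes "\<forall>(a, b)\<in>set l. a \<in> {0,1,2} \<and> b \<in> {0,1,2::real}"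
  shows "real (length (filter (\<lambda>(a, b). a \<noteq> b) l)) \<le> (\<Sum>(a, b) \<leftarrow> l. \<bar>a - b\<bar>)"
  using assms
proof (induction l)
  case Nil then show ?case by simp
next
  case (Cons z l)
  obtain a b where z: "z = (a, b)" by fastforce
  have ab: "a \<in> {0,1,2}" "b \<in> {0,1,2}" using Cons.prems z by auto
  have "a \<noteq> b \<Longrightarrow> 1 \<le> \<bar>a - b\<bar>" using ab by auto
  then show ?case using Cons z by auto
qed

theorem mainTheorem9:
  fixes m d :: nat and r :: "real list"
  assumes "m > 0" and "4 \<le> d" and "real d \<le> real m / 2" and "r \<in> T_set m"
  shows "real (card {s \<in> T_set m - {r}. d_erp r s \<le> real d})
           < (3 * exp 1 * real m / real d) ^ (2 * d)"
proof -
  let ?S = "{s \<in> T_set m - {r}. d_erp r s \<le> real d}"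
  define N where "N = m + d"
  have rT: "length r = m" "set r \<subseteq> {1,2}" using assms(4) unfolding T_set_def by auto
  have rf: "filter (\<lambda>a. a \<noteq> 0) r = r" using rT(2) by (auto intro!: filter_True)
  have sub: "?S \<subseteq> dec r ` W N d"
  proof
    fix s assume sS: "s \<in> ?S"
    have sT: "length s = m" "set s \<subseteq> {1,2}" using sS unfolding T_set_def by auto
    have sf: "filter (\<lambda>a. a \<noteq> 0) s = s" using sT(2) by (auto intro!: filter_True)
    define X where "X = {l1_dist x y | p x y.
      p \<ge> max (length r) (length s) \<and> length x = p \<and> length y = p
      \<and> gap_ins r x \<and> gap_ins s y}"
    have "l1_dist r s \<in> X" unfolding X_def using rT sT
      by (auto intro!: exI[of _ m] gap_ins.refl)
    then have ne: "X \<noteq> {}" by auto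
    have "Inf X < real d + 1" using sS unfolding d_erp_def X_def by auto
    then obtain v where "v \<in> X" "v < real d + 1" using cInf_lessD[OF ne] by blast
    then obtain p x y where xy: "length x = p" "length y = p" "gap_ins r x" "gap_ins s y"
      "l1_dist x y < real d + 1" unfolding X_def by auto
    have fx: "filter (\<lambda>a. a \<noteq> 0) x = r" and setx: "set x \<subseteq> {0,1,2}"
      using gap_props[OF xy(3)] rf rT by auto
    have fy: "filter (\<lambda>a. a \<noteq> 0) y = s" and sety: "set y \<subseteq> {0,1,2}"
      using gap_props[OF xy(4)] sf sT by auto
    define zs where "zs = filter (\<lambda>(a, b). \<not> (a = 0 \<and> b = 0)) (zip x y)"
    have zip01: "\<forall>(a, b)\<in>set (zip x y). a \<in> {0,1,2} \<and> b \<in> {0,1,2::real}"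
      using setx sety by (auto dest: set_zip_leftD set_zip_rightD)
    have zsp: "\<forall>(a, b)\<in>set zs. a \<in> {0,1,2} \<and> b \<in> {0,1,2} \<and> \<not> (a = 0 \<and> b = 0)"
      using zip01 unfolding zs_def by auto
    have zfst: "filter (\<lambda>a. a \<noteq> 0) (map fst zs) = r"
      unfolding zs_def filter_fst using xy fx by simp
    have zsnd: "filter (\<lambda>a. a \<noteq> 0) (map snd zs) = s"
      unfolding zs_def filter_snd using xy fy by simp
    have "real (length (filter (\<lambda>(a, b). a \<noteq> b) (zip x y))) \<le> l1_dist x y"
      unfolding l1_dist_def by (rule nd_le_sum[OF zip01])
    then have "real (length (filter (\<lambda>(a, b). a \<noteq> b) zs)) < real d + 1"
      unfolding zs_def filter_nd using xy(5) by linarith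
    then have nd: "length (filter (\<lambda>(a, b). a \<noteq> b) zs) \<le> d" by linarith
    have "length zs \<le> length (filter (\<lambda>a. a \<noteq> 0) (map fst zs)) + length (filter (\<lambda>(a, b). a \<noteq> b) zs)"
      using zsp by (intro len_bound) auto
    then have lz: "length zs \<le> N" using zfst rT nd unfolding N_def by simp
    define w where "w = map tau zs @ replicate (N - length zs) Keep"
    have "w \<in> W N d" unfolding W_def w_def using lz nd keep_count[of zs] by simp
    moreover have "dec r w = s" unfolding w_def
      using dec_append[OF zsp, of "replicate (N - length zs) Keep"] zfst zsnd dec_replicate
      by simp
    ultimately show "s \<in> dec r ` W N d" by blast
  qed
  have dpos: "real d > 0" using assms(2) by simp
  define y where "y = real d / real N"
  have Npos: "real N > 0" unfolding N_def using dpos by simp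
  have y: "0 < y" "y \<le> 1" unfolding y_def N_def using dpos by auto
  have "card ?S \<le> card (dec r ` W N d)" by (intro card_mono finite_imageI finite_W sub)
  also have "\<dots> \<le> card (W N d)" by (intro card_image_le finite_W)
  finally have "real (card ?S) \<le> real (card (W N d))" by simp
  also have "\<dots> \<le> (1/y)^d * (1 + 4*y)^N" by (rule card_W[OF y])
  also have "\<dots> \<le> (1/y)^d * (exp (4*y))^N"
    using y by (intro mult_left_mono power_mono) (auto simp del: exp_ge_add_one_self intro: exp_ge_add_one_self[of "4*y", simplified])
  also have "(exp (4*y))^N = exp (4 * real d)"
    using Npos by (simp add: exp_of_nat_mult[symmetric] y_def)
  also have "exp (4 * real d) = (exp 1 ^ 4) ^ d"
    by (metis exp_of_nat_mult mult.commute mult_1 of_nat_numeral power_mult)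
  also have "(1/y)^d * (exp 1 ^ 4) ^ d = (real N / real d * exp 1 ^ 4) ^ d"
  proof -
    have h: "1/y = real N / real d" by (simp add: y_def)
    show ?thesis by (simp only: h power_mult_distrib)
  qed
  also have "\<dots> < ((3 * exp 1 * real m / real d)^2) ^ d"
  proof (rule power_strict_mono)
    have e: "exp (1::real) \<le> 3" by (rule exp_le)
    have epos: "exp (1::real) > 0" by simp
    have a: "real d * real d \<le> (real m / 2) * (real m / 2)"
      using mult_mono[OF assms(3) assms(3)] dpos by auto
    have b: "real d * real m \<le> (real m / 2) * real m"
      using mult_right_mono[OF assms(3), of "real m"] by auto
    have e3: "real N * real d = real d * real m + real d * real d" by (simp add: N_def algebra_simps)
    have md: "real N * real d \<le> 3/4 * real m * real m"
      using a b e3 by (simp add: field_simps)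
    have ee: "exp (1::real)^2 \<le> 9" using power_mono[OF e, of 2] epos by simp
    have "real N * real d * exp 1 ^ 2 \<le> 3/4 * real m * real m * 9"
      using mult_mono[OF md ee] by simp
    also have "\<dots> < 9 * real m * real m" using assms(1) by simp
    finally have key: "real N * real d * exp 1 ^ 2 < 9 * real m * real m" .
    have "real N / real d * exp 1 ^ 4 = (real N * real d * exp 1 ^ 2) * (exp 1 ^ 2 / (real d)^2)"
      using dpos by (simp add: field_simps power2_eq_square eval_nat_numeral)
    also have "\<dots> < (9 * real m * real m) * (exp 1 ^ 2 / (real d)^2)"
      using key dpos epos by (intro mult_strict_right_mono) auto
    also have "\<dots> = (3 * exp 1 * real m / real d)^2"
      using dpos by (simp add: field_simps power2_eq_square)
    finally show "real N / real d * exp 1 ^ 4 < (3 * exp 1 * real m / real d)^2" .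
    show "0 \<le> real N / real d * exp 1 ^ 4" by simp
    show "0 < d" using assms(2) by simp
  qed
  also have "\<dots> = (3 * exp 1 * real m / real d) ^ (2 * d)" by (simp add: power_mult)
  finally show ?thesis .
qed

end
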